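(* For every $z_0,z_1\in\ell'$, $k\in\mathbb{Z}\setminus\{0\}$ and every $u\in\hat{\mathcal H}^k_{z_0z_1}$, $$\min_{s\in[0,1]}|u(s)|>L\exp\!\left(-\frac{\mathcal L(u)}{\sqrt\beta}\right),$$ where $L=\operatorname{dist}(0,\ell)$.
   Context: Fix $L,h,\beta>0$, $V_\beta(z)=-\frac1{|z|}-\frac{\beta}{|z|^2}$, $\ell=\{y=-L\}$, $\mathcal P=\{y>-L\}$. Winding number: for $u:[a,b]\to\overline{\mathcal P}$ with $u(a),u(b)\in\ell$, $u(s)\in\mathcal P\setminus\{0\}$ on $(a,b)$, $\operatorname{Ind}(u)$ is the winding number around $0$ of the closed curve formed by $u$ followed by the oriented segment from $u(b)$ to $u(a)$. Fix a solution $\hat{\mathcal Z}$ of $\ddot z=-\nabla V_\beta(z)$ at energy $h$ ($\frac12|\dot z|^2+V_\beta(z)=h$) meeting $\ell$ at times $t_0<t_1$, in $\mathcal P$ on $(t_0,t_1)$, with winding number $1$ on $[t_0,t_1]$, the angle between $\dot{\hat{\mathcal Z}}(t_0)$ and $(1,0)$ less than $\pi/2$ and the angle between $(-1,0)$ and $\dot{\hat{\mathcal Z}}(t_1)$ greater than $\pi/2$. $\ell'$ is the segment of $\ell$ between $\hat{\mathcal Z}(t_0)$ and $\hat{\mathcal Z}(t_1)$, $D$ the compact region bounded by $\hat{\mathcal Z}([t_0,t_1])$ and $\ell'$. $\hat{\mathcal H}^k_{z_0z_1}=\{u\in H^1([0,1],D):u(0)=z_0,u(1)=z_1,u(s)\ne0\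 \forall s,\operatorname{Ind}(u)=k\}$. The Jacobi length of a collision-free $u$ is $\mathcal L(u)=\int_0^1|\dot u(s)|\sqrt{h-V_\beta(u(s))}\,ds$. *)

theory Defs
  imports "HOL-Complex_Analysis.Complex_Analysis"
begin

definition V_beta :: "real \<Rightarrow> complex \<Rightarrow> real" where
  "V_beta \<beta> z = - 1 / cmod z - \<beta> / (cmod z)^2"

definition grad_V_beta :: "real \<Rightarrow> complex \<Rightarrow> complex" where
  "grad_V_beta \<beta> z = of_real (1 / (cmod z)^3 + 2 * \<beta> / (cmod z)^4) * z"

definition vec_angle :: "complex \<Rightarrow> complex \<Rightarrow> real" where
  "vec_angle u v = arccos ((u \<bullet> v) / (cmod u * cmod v))"

definition Ind :: "real \<Rightarrow> real \<Rightarrow> (real \<Rightarrow> complex) \<Rightarrow> complex" where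
  "Ind a b u = winding_number ((\<lambda>s. u (a + s * (b - a))) +++ linepath (u b) (u a)) 0"

definition region_D :: "real \<Rightarrow> real \<Rightarrow> (real \<Rightarrow> complex) \<Rightarrow> complex set" where
  "region_D t0 t1 Z =
     (let \<Gamma> = (\<lambda>s. Z (t0 + s * (t1 - t0))) +++ linepath (Z t1) (Z t0)
      in path_image \<Gamma> \<union> inside (path_image \<Gamma>))"

text \<open>g is a weak derivative of u on [0,1] in the H^1 sense: g is square integrable
  and u is the integral of g.\<close>
definition H1_deriv :: "(real \<Rightarrow> complex) \<Rightarrow> (real \<Rightarrow> complex) \<Rightarrow> bool" where
  "H1_deriv u g \<longleftrightarrow>
     g absolutely_integrable_on {0..1} \<and>
     (\<lambda>s. (cmod (g s))^2) integrable_on {0..1} \<and>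
     (\<forall>t\<in>{0..1}. (g has_integral (u t - u 0)) {0..t})"

definition H1 :: "(real \<Rightarrow> complex) \<Rightarrow> bool" where
  "H1 u \<longleftrightarrow> (\<exists>g. H1_deriv u g)"

definition H_hat :: "complex set \<Rightarrow> int \<Rightarrow> complex \<Rightarrow> complex \<Rightarrow> (real \<Rightarrow> complex) set" where
  "H_hat D k z0 z1 = {u. H1 u \<and> (\<forall>s\<in>{0..1}. u s \<in> D) \<and> u 0 = z0 \<and> u 1 = z1 \<and>
                         (\<forall>s\<in>{0..1}. u s \<noteq> 0) \<and> Ind 0 1 u = of_int k}"

text \<open>Jacobi length, computed with the (a.e. defined) derivative g of u.\<close>
definition jacobi_length :: "real \<Rightarrow> real \<Rightarrow> (real \<Rightarrow> complex) \<Rightarrow> (real \<Rightarrow> complex) \<Rightarrow> real" where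
  "jacobi_length h \<beta> u g = integral {0..1} (\<lambda>s. cmod (g s) * sqrt (h - V_beta \<beta> (u s)))"

end

theory Submission
  imports Defs
begin

lemma wn_cong:
  assumes "\<And>t. t \<in> {0..1} \<Longrightarrow> \<gamma> t = \<gamma>' t"
  shows "winding_number \<gamma> z = winding_number \<gamma>' z"
proof -
  have "winding_number_prop \<gamma> z e p n = winding_number_prop \<gamma>' z e p n" for e p n
    using assms unfolding winding_number_prop_def pathstart_def pathfinish_def by auto
  then show ?thesis unfolding winding_number_def by simp
qed

lemma H1_basic:
  assumes "H1_deriv u g"
  shows "g integrable_on {0..1}" "(\<lambda>x. cmod (g x)) integrable_on {0..1}"
    "(\<lambda>x. cmod (g x)) absolutely_integrable_on {0..1}"
    "continuous_on {0..1} u"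
    "\<And>a b. 0 \<le> a \<Longrightarrow> a \<le> b \<Longrightarrow> b \<le> 1 \<Longrightarrow> u b - u a = integral {a..b} g"
proof -
  have ai: "g absolutely_integrable_on {0..1}" using assms unfolding H1_deriv_def by auto
  then show gi: "g integrable_on {0..1}" using set_lebesgue_integral_eq_integral(1) by blast
  show "(\<lambda>x. cmod (g x)) absolutely_integrable_on {0..1}"
    using absolutely_integrable_norm[OF ai] by (simp add: o_def)
  then show "(\<lambda>x. cmod (g x)) integrable_on {0..1}" using set_lebesgue_integral_eq_integral(1) by blast
  have ui: "\<And>t. t \<in> {0..1} \<Longrightarrow> u t = u 0 + integral {0..t} g"
  proof -
    fix t :: real assume "t \<in> {0..1}"
    then have "integral {0..t} g = u t - u 0" using assms unfolding H1_deriv_def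
      by (auto intro: integral_unique)
    then show "u t = u 0 + integral {0..t} g" by simp
  qed
  have "continuous_on {0..1} (\<lambda>t. u 0 + integral {0..t} g)"
    by (intro continuous_intros indefinite_integral_continuous_1 gi)
  then show "continuous_on {0..1} u" using continuous_on_cong ui by (smt (verit))
  fix a b :: real assume ab: "0 \<le> a" "a \<le> b" "b \<le> 1"
  have gb: "g integrable_on {0..b}" using gi integrable_on_subinterval ab by fastforce
  have "integral {0..a} g + integral {a..b} g = integral {0..b} g"
    using Henstock_Kurzweil_Integration.integral_combine[OF ab(1,2) gb] by simp
  then show "u b - u a = integral {a..b} g" using ui[of a] ui[of b] ab by (auto simp: algebra_simps)
qed

lemma prod_int:
  assumes "continuous_on {0..1::real} f" "(G::real\<Rightarrow>real) absolutely_integrable_on {0..1}"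
  shows "(\<lambda>x. f x * G x) integrable_on {0..1}"
proof -
  have "(\<lambda>x. f x * G x) absolutely_integrable_on {0..1}"
    apply (rule absolutely_integrable_bounded_measurable_product_real)
    using assms continuous_imp_measurable_on_sets_lebesgue[OF assms(1)] compact_continuous_image[OF assms(1)]
    by (auto intro: compact_imp_bounded)
  then show ?thesis using set_lebesgue_integral_eq_integral(1) by blast
qed

lemma log_step:
  assumes H: "H1_deriv u g" and nz: "\<forall>s\<in>{0..1}. u s \<noteq> 0" and e: "\<epsilon> > 0"
  shows "\<exists>\<delta>>0. \<forall>a b. 0 \<le> a \<longrightarrow> a \<le> b \<longrightarrow> b \<le> 1 \<longrightarrow> b - a < \<delta> \<longrightarrow>
     ln (cmod (u a)) - ln (cmod (u b)) \<le> (1+\<epsilon>) * integral {a..b} (\<lambda>t. cmod (g t) / cmod (u t))"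
proof -
  note B = H1_basic[OF H]
  have mc: "continuous_on {0..1} (\<lambda>t. cmod (u t))" using B(4) by (intro continuous_intros)
  obtain s0 where s0: "s0 \<in> {0..1}" "\<forall>y\<in>{0..1}. cmod (u s0) \<le> cmod (u y)"
    using continuous_attains_inf[OF compact_Icc _ mc] by auto
  define r where "r = cmod (u s0)"
  have r: "r > 0" using nz s0 r_def by auto
  have rle: "\<And>t. t \<in> {0..1} \<Longrightarrow> r \<le> cmod (u t)" using s0 r_def by auto
  have uc: "uniformly_continuous_on {0..1} (\<lambda>t. cmod (u t))"
    by (rule compact_uniformly_continuous[OF mc compact_Icc])
  have er: "\<epsilon> * r > 0" using e r by simp
  obtain d where d: "d > 0" "\<And>x x'. x\<in>{0..1} \<Longrightarrow> x'\<in>{0..1} \<Longrightarrow> dist x' x < d \<Longrightarrow>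
      dist (cmod (u x')) (cmod (u x)) < \<epsilon> * r"
    using uniformly_continuous_onE[OF uc er] by blast
  have invc: "continuous_on {0..1} (\<lambda>t. 1 / cmod (u t))"
    using mc nz B(4) by (intro continuous_intros) auto
  have Qi: "(\<lambda>t. cmod (g t) / cmod (u t)) integrable_on {0..1}"
    using prod_int[OF invc B(3)] by simp
  show ?thesis
  proof (intro exI[of _ d] conjI allI impI d)
    fix a b :: real assume ab: "0 \<le> a" "a \<le> b" "b \<le> 1" "b - a < d"
    define mb where "mb = cmod (u b)"
    have mb: "mb \<ge> r" "mb > 0" using rle[of b] ab r mb_def by auto
    have sub: "{a..b} \<subseteq> {0..1}" using ab by auto
    have bnd: "cmod (u t) \<le> (1+\<epsilon>) * mb" if "t \<in> {a..b}" for t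
    proof -
      have "dist (cmod (u t)) mb < \<epsilon> * r"
      proof -
        have tb: "t \<in> {0..1}" "b \<in> {0..1}" "dist t b < d" using that ab sub by (auto simp: dist_real_def)
        show ?thesis using d(2)[OF tb(2) tb(1) tb(3)] by (simp add: mb_def)
      qed
      then have "cmod (u t) < mb + \<epsilon> * r" by (auto simp: dist_real_def)
      also have "\<dots> \<le> mb + \<epsilon> * mb" using mb e by auto
      finally show ?thesis by (simp add: algebra_simps)
    qed
    have Gi: "(\<lambda>t. cmod (g t)) integrable_on {a..b}" using B(2) integrable_on_subinterval sub by blast
    have Qab: "(\<lambda>t. cmod (g t) / cmod (u t)) integrable_on {a..b}" using Qi integrable_on_subinterval sub by blast
    have gab: "g integrable_on {a..b}" using B(1) integrable_on_subinterval sub by blast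
    have "cmod (u a) - mb \<le> cmod (u b - u a)" unfolding mb_def by (metis norm_minus_commute norm_triangle_ineq2)
    also have "\<dots> = cmod (integral {a..b} g)" using B(5) ab by simp
    also have "\<dots> \<le> integral {a..b} (\<lambda>t. cmod (g t))"
      by (rule integral_norm_bound_integral[OF gab Gi]) auto
    finally have d1: "cmod (u a) - mb \<le> integral {a..b} (\<lambda>t. cmod (g t))" .
    have pa: "cmod (u a) > 0" using nz ab by auto
    have "ln (cmod (u a)) - ln mb = ln (cmod (u a) / mb)" using pa mb by (simp add: ln_div)
    also have "\<dots> \<le> cmod (u a) / mb - 1" using pa mb by (intro ln_le_minus_one) auto
    also have "\<dots> = (cmod (u a) - mb) / mb" using mb by (simp add: field_simps)
    also have "\<dots> \<le> integral {a..b} (\<lambda>t. cmod (g t)) / mb" using d1 mb by (simp add: divide_right_mono)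
    also have "\<dots> = (1+\<epsilon>) * (integral {a..b} (\<lambda>t. cmod (g t)) * (1 / ((1+\<epsilon>) * mb)))"
    proof -
      have ne: "1 + \<epsilon> \<noteq> 0" using e by simp
      have "(1+\<epsilon>) * (integral {a..b} (\<lambda>t. cmod (g t)) * (1 / ((1+\<epsilon>) * mb)))
          = ((1+\<epsilon>) * integral {a..b} (\<lambda>t. cmod (g t))) / ((1+\<epsilon>) * mb)" by simp
      also have "\<dots> = integral {a..b} (\<lambda>t. cmod (g t)) / mb"
        using ne by (rule mult_divide_mult_cancel_left)
      finally show ?thesis by simp
    qed
    finally have c1: "ln (cmod (u a)) - ln mb \<le> (1+\<epsilon>) * (integral {a..b} (\<lambda>t. cmod (g t)) * (1 / ((1+\<epsilon>) * mb)))" .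
    have c2: "integral {a..b} (\<lambda>t. cmod (g t)) * (1 / ((1+\<epsilon>) * mb)) =
        integral {a..b} (\<lambda>t. cmod (g t) * (1 / ((1+\<epsilon>) * mb)))" by simp
    have c3: "integral {a..b} (\<lambda>t. cmod (g t) * (1 / ((1+\<epsilon>) * mb))) \<le> integral {a..b} (\<lambda>t. cmod (g t) / cmod (u t))"
    proof (rule integral_le)
      show "(\<lambda>t. cmod (g t) * (1 / ((1 + \<epsilon>) * mb))) integrable_on {a..b}"
        using Gi by (intro integrable_on_mult_left)
      show "(\<lambda>t. cmod (g t) / cmod (u t)) integrable_on {a..b}" using Qab .
    next
      fix t assume t: "t \<in> {a..b}"
      have pt: "cmod (u t) > 0" using nz t sub by auto
      have pp: "0 < (1 + \<epsilon>) * mb * cmod (u t)" using pt e mb by simp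
      have "cmod (g t) * (1 / ((1 + \<epsilon>) * mb)) = cmod (g t) / ((1 + \<epsilon>) * mb)" by simp
      also have "\<dots> \<le> cmod (g t) / cmod (u t)"
        by (rule divide_left_mono[OF bnd[OF t] norm_ge_zero pp])
      finally show "cmod (g t) * (1 / ((1 + \<epsilon>) * mb)) \<le> cmod (g t) / cmod (u t)" .
    qed
    have c4: "(1+\<epsilon>) * integral {a..b} (\<lambda>t. cmod (g t) * (1 / ((1+\<epsilon>) * mb)))
        \<le> (1+\<epsilon>) * integral {a..b} (\<lambda>t. cmod (g t) / cmod (u t))"
      using c3 e by (intro mult_left_mono) auto
    show "ln (cmod (u a)) - ln (cmod (u b)) \<le> (1+\<epsilon>) * integral {a..b} (\<lambda>t. cmod (g t) / cmod (u t))"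
      using c1 c4 c2 unfolding mb_def by simp
  qed
qed


lemma eps_le:
  fixes x y :: real
  assumes "y \<ge> 0" "\<And>e. e > 0 \<Longrightarrow> x \<le> (1+e) * y"
  shows "x \<le> y"
proof (rule ccontr)
  assume "\<not> x \<le> y"
  then have xy: "x > y" by simp
  define e where "e = (x - y) / (2*(y+1))"
  have e: "e > 0" using xy assms(1) by (simp add: e_def)
  have "(1+e)*y = y + (x-y) * (y / (2*(y+1)))" by (simp add: e_def field_simps)
  also have "\<dots> < y + (x - y)"
  proof -
    have h: "y / (2*(y+1)) < 1" using assms(1) by (simp add: divide_less_eq)
    have "(x-y) * (y / (2*(y+1))) < (x-y) * 1" using mult_strict_left_mono[OF h] xy by simp
    then show ?thesis by simp
  qed
  finally show False using assms(2)[OF e] by simp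
qed

lemma log_bound:
  assumes H: "H1_deriv u g" and nz: "\<forall>s\<in>{0..1}. u s \<noteq> 0" and s: "s \<in> {0..1}"
  shows "ln (cmod (u 0)) - ln (cmod (u s)) \<le> integral {0..1} (\<lambda>t. cmod (g t) / cmod (u t))"
proof (rule eps_le)
  note B = H1_basic[OF H]
  define Q where "Q = (\<lambda>t. cmod (g t) / cmod (u t))"
  have mc: "continuous_on {0..1} (\<lambda>t. cmod (u t))" using B(4) by (intro continuous_intros)
  have invc: "continuous_on {0..1} (\<lambda>t. 1 / cmod (u t))"
    using mc nz B(4) by (intro continuous_intros) auto
  have Qi: "Q integrable_on {0..1}"
    using prod_int[OF invc B(3)] by (simp add: Q_def)
  have Qnn: "integral {a..b} Q \<ge> 0" for a b :: real
  proof (cases "Q integrable_on {a..b}")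
    case True then show ?thesis by (rule integral_nonneg) (auto simp: Q_def)
  next
    case False then show ?thesis by (simp add: not_integrable_integral)
  qed
  show "integral {0..1} (\<lambda>t. cmod (g t) / cmod (u t)) \<ge> 0" using Qnn unfolding Q_def .
  fix e :: real assume e: "e > 0"
  obtain d where d: "d > 0" and step: "\<And>a b. 0 \<le> a \<Longrightarrow> a \<le> b \<Longrightarrow> b \<le> 1 \<Longrightarrow> b - a < d \<Longrightarrow>
     ln (cmod (u a)) - ln (cmod (u b)) \<le> (1+e) * integral {a..b} Q"
    using log_step[OF H nz e] unfolding Q_def by blast
  obtain N :: nat where N: "N > 0" "1 / real N < d"
  proof -
    obtain n :: nat where "real n > 1 / d" using reals_Archimedean2 by blast
    moreover then have "n > 0" using d by (cases n) auto
    ultimately show ?thesis using that d by (auto simp: field_simps)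
  qed
  have s01: "0 \<le> s" "s \<le> 1" using s by auto
  have sN: "s / real N < d" using N s01
    by (smt (verit, best) divide_right_mono of_nat_0_less_iff)
  have ind: "n \<le> N \<longrightarrow> ln (cmod (u 0)) - ln (cmod (u (real n * s / real N)))
        \<le> (1+e) * integral {0..real n * s / real N} Q" for n
  proof (induction n)
    case 0
    then show ?case by simp
  next
    case (Suc n)
    show ?case
    proof
      assume nN: "Suc n \<le> N"
      define a where "a = real n * s / real N"
      define b where "b = real (Suc n) * s / real N"
      have a0: "0 \<le> a" using s01 N by (simp add: a_def)
      have ab: "a \<le> b" using s01 N unfolding a_def b_def
        by (intro divide_right_mono mult_right_mono) auto
      have "real (Suc n) * s \<le> real N * s" using s01 nN by (intro mult_right_mono) auto
      then have "b \<le> real N * s / real N" unfolding b_def by (intro divide_right_mono) auto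
      then have "b \<le> s" using N by simp
      then have b1: "b \<le> 1" using s01 by simp
      have bad: "b - a = s / real N" by (simp add: a_def b_def add_divide_distrib algebra_simps)
      have IH: "ln (cmod (u 0)) - ln (cmod (u a)) \<le> (1+e) * integral {0..a} Q"
        using Suc.IH nN unfolding a_def by simp
      have st: "ln (cmod (u a)) - ln (cmod (u b)) \<le> (1+e) * integral {a..b} Q"
        using step[OF a0 ab b1] bad sN by simp
      have Qb: "Q integrable_on {0..b}" using Qi integrable_on_subinterval b1 by fastforce
      have "integral {0..b} Q = integral {0..a} Q + integral {a..b} Q"
        using Henstock_Kurzweil_Integration.integral_combine[OF a0 ab Qb] by simp
      then have "ln (cmod (u 0)) - ln (cmod (u b)) \<le> (1+e) * integral {0..b} Q"
        using IH st by (simp add: algebra_simps)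
      then show "ln (cmod (u 0)) - ln (cmod (u (real (Suc n) * s / real N)))
        \<le> (1+e) * integral {0..real (Suc n) * s / real N} Q" unfolding b_def .
    qed
  qed
  have "ln (cmod (u 0)) - ln (cmod (u s)) \<le> (1+e) * integral {0..s} Q"
    using ind[of N] N by simp
  also have "integral {0..s} Q \<le> integral {0..1} Q"
  proof -
    have "integral {0..1} Q = integral {0..s} Q + integral {s..1} Q"
      using Henstock_Kurzweil_Integration.integral_combine[OF s01 Qi] by simp
    then show ?thesis using Qnn[of s 1] by simp
  qed
  then have "(1+e) * integral {0..s} Q \<le> (1+e) * integral {0..1} Q" using e by simp
  finally show "ln (cmod (u 0)) - ln (cmod (u s)) \<le> (1+e) * integral {0..1} (\<lambda>t. cmod (g t) / cmod (u t))"
    unfolding Q_def .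
qed


lemma pt_ineq:
  fixes m r h \<beta> G :: real
  assumes "r > 0" "r \<le> m" "h > 0" "\<beta> > 0" "G \<ge> 0"
  shows "sqrt (\<beta> + r) * (G / m) \<le> G * sqrt (h - (- 1 / m - \<beta> / m^2))"
proof -
  have m: "m > 0" using assms by simp
  have "r / m^2 \<le> m / m^2" using assms m by (intro divide_right_mono) auto
  also have "m / m^2 = 1 / m" using m by (simp add: power2_eq_square)
  finally have "(\<beta> + r) / m^2 \<le> h - (- 1 / m - \<beta> / m^2)" using assms
    by (simp add: add_divide_distrib)
  then have "sqrt ((\<beta> + r) / m^2) \<le> sqrt (h - (- 1 / m - \<beta> / m^2))" by simp
  moreover have "sqrt ((\<beta> + r) / m^2) = sqrt (\<beta> + r) / m" using m by (simp add: real_sqrt_divide)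
  ultimately have "sqrt (\<beta> + r) / m \<le> sqrt (h - (- 1 / m - \<beta> / m^2))" by simp
  then have A: "G * (sqrt (\<beta> + r) / m) \<le> G * sqrt (h - (- 1 / m - \<beta> / m^2))"
    using assms by (intro mult_left_mono) auto
  have eq: "sqrt (\<beta> + r) * (G / m) = G * (sqrt (\<beta> + r) / m)" by simp
  show ?thesis by (subst eq) (rule A)
qed

theorem lemma2p10:
  fixes L h \<beta> t0 t1 :: real and Z Z' :: "real \<Rightarrow> complex"
  assumes "L > 0" and "h > 0" and "\<beta> > 0" and "t0 < t1"
    and "\<forall>t\<in>{t0..t1}. Z t \<noteq> 0"
    and "\<forall>t\<in>{t0..t1}. (Z has_vector_derivative Z' t) (at t within {t0..t1})"
    and "\<forall>t\<in>{t0..t1}. (Z' has_vector_derivative (- grad_V_beta \<beta> (Z t))) (at t within {t0..t1})"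
    and "\<forall>t\<in>{t0..t1}. (cmod (Z' t))^2 / 2 + V_beta \<beta> (Z t) = h"
    and "Im (Z t0) = - L" and "Im (Z t1) = - L"
    and "\<forall>t\<in>{t0<..<t1}. Im (Z t) > - L"
    and "Ind t0 t1 Z = 1"
    and "vec_angle (Z' t0) 1 < pi / 2"
    and "vec_angle (- 1) (Z' t1) > pi / 2"
  shows "\<forall>z0\<in>closed_segment (Z t0) (Z t1). \<forall>z1\<in>closed_segment (Z t0) (Z t1).
           \<forall>k::int. k \<noteq> 0 \<longrightarrow>
           (\<forall>u\<in>H_hat (region_D t0 t1 Z) k z0 z1. \<forall>g. H1_deriv u g \<longrightarrow>
              Inf ((\<lambda>s. cmod (u s)) ` {0..1}) > L * exp (- jacobi_length h \<beta> u g / sqrt \<beta>))"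
proof (intro ballI allI impI)
  fix z0 z1 :: complex and k :: int and u g :: "real \<Rightarrow> complex"
  assume z0: "z0 \<in> closed_segment (Z t0) (Z t1)" and k: "k \<noteq> 0"
    and uH: "u \<in> H_hat (region_D t0 t1 Z) k z0 z1" and H: "H1_deriv u g"
  have u0: "u 0 = z0" and nz: "\<forall>s\<in>{0..1}. u s \<noteq> 0" and ind: "Ind 0 1 u = of_int k"
    using uH unfolding H_hat_def by auto
  obtain c where c: "z0 = (1 - c) *\<^sub>R Z t0 + c *\<^sub>R Z t1" using z0 by (auto simp: in_segment)
  have "Im z0 = (1 - c) * Im (Z t0) + c * Im (Z t1)" using c by simp
  then have "Im z0 = - L" using assms(9,10) by (simp add: algebra_simps)
  then have Lm0: "L \<le> cmod (u 0)" using u0 abs_Im_le_cmod[of z0] assms(1) by simp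
  note B = H1_basic[OF H]
  have mc: "continuous_on {0..1} (\<lambda>t. cmod (u t))" using B(4) by (intro continuous_intros)
  obtain s where s: "s \<in> {0..1}" "\<forall>y\<in>{0..1}. cmod (u s) \<le> cmod (u y)"
    using continuous_attains_inf[OF compact_Icc _ mc] by auto
  obtain s2 where s2: "s2 \<in> {0..1}" "\<forall>y\<in>{0..1}. cmod (u y) \<le> cmod (u s2)"
    using continuous_attains_sup[OF compact_Icc _ mc] by auto
  define r where "r = cmod (u s)"
  define R where "R = cmod (u s2)"
  have r: "r > 0" using nz s r_def by auto
  have rle: "\<And>t. t \<in> {0..1} \<Longrightarrow> r \<le> cmod (u t)" using s r_def by auto
  have Rge: "\<And>t. t \<in> {0..1} \<Longrightarrow> cmod (u t) \<le> R" using s2 R_def by auto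
  have Inf_eq: "Inf ((\<lambda>s. cmod (u s)) ` {0..1}) = r"
    unfolding r_def using s by (intro cInf_eq_minimum) auto
  define Q where "Q = (\<lambda>t. cmod (g t) / cmod (u t))"
  define \<Phi> where "\<Phi> = integral {0..1} Q"
  have lb: "ln (cmod (u 0)) - ln r \<le> \<Phi>"
    using log_bound[OF H nz s(1)] unfolding r_def \<Phi>_def Q_def .
  have invc: "continuous_on {0..1} (\<lambda>t. 1 / cmod (u t))"
    using mc nz B(4) by (intro continuous_intros) auto
  have Qi: "Q integrable_on {0..1}"
    using prod_int[OF invc B(3)] by (simp add: Q_def)
  have Phi0: "\<Phi> \<ge> 0" unfolding \<Phi>_def using Qi by (rule integral_nonneg) (auto simp: Q_def)
  show "Inf ((\<lambda>s. cmod (u s)) ` {0..1}) > L * exp (- jacobi_length h \<beta> u g / sqrt \<beta>)"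
  proof (cases "\<Phi> = 0")
    case True
    have const: "u t = u 0" if t: "t \<in> {0..1}" for t
    proof -
      have t01: "0 \<le> t" "t \<le> 1" using t by auto
      have gt: "g integrable_on {0..t}" using B(1) integrable_on_subinterval t01 by fastforce
      have Gt: "(\<lambda>x. cmod (g x)) integrable_on {0..t}" using B(2) integrable_on_subinterval t01 by fastforce
      have "cmod (u t - u 0) = cmod (integral {0..t} g)" using B(5)[of 0 t] t01 by simp
      also have "\<dots> \<le> integral {0..t} (\<lambda>x. cmod (g x))"
        by (rule integral_norm_bound_integral[OF gt Gt]) auto
      also have "\<dots> \<le> integral {0..1} (\<lambda>x. cmod (g x))"
      proof -
        have "integral {0..1} (\<lambda>x. cmod (g x)) = integral {0..t} (\<lambda>x. cmod (g x)) + integral {t..1} (\<lambda>x. cmod (g x))"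
          using Henstock_Kurzweil_Integration.integral_combine[OF t01 B(2)] by simp
        moreover have "integral {t..1} (\<lambda>x. cmod (g x)) \<ge> 0"
          using B(2) integrable_on_subinterval t01 by (intro integral_nonneg) fastforce+
        ultimately show ?thesis by simp
      qed
      also have "\<dots> \<le> integral {0..1} (\<lambda>x. R * Q x)"
      proof (rule integral_le[OF B(2)])
        show "(\<lambda>x. R * Q x) integrable_on {0..1}" using Qi by (intro integrable_on_mult_right)
      next
        fix x :: real assume x: "x \<in> {0..1}"
        have px: "cmod (u x) > 0" using nz x by auto
        have "cmod (g x) = cmod (u x) * Q x" using px by (simp add: Q_def)
        also have "\<dots> \<le> R * Q x" using Rge[OF x] by (intro mult_right_mono) (auto simp: Q_def)
        finally show "cmod (g x) \<le> R * Q x" .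
      qed
      also have "\<dots> = R * \<Phi>" unfolding \<Phi>_def by simp
      also have "\<dots> = 0" using True by simp
      finally show ?thesis by simp
    qed
    have "Ind 0 1 u = winding_number (\<lambda>t. u 0) 0"
      unfolding Ind_def
    proof (rule wn_cong)
      fix t :: real assume t: "t \<in> {0..1}"
      show "((\<lambda>s. u (0 + s * (1 - 0))) +++ linepath (u 1) (u 0)) t = u 0"
        using t const[of "2*t"] const[of 1] by (auto simp: joinpaths_def linepath_def algebra_simps)
    qed
    also have "\<dots> = 0" using nz by (intro winding_number_zero_const) auto
    finally show ?thesis using ind k by simp
  next
    case False
    then have Phip: "\<Phi> > 0" using Phi0 by simp
    define J where "J = jacobi_length h \<beta> u g"
    have fc: "continuous_on {0..1} (\<lambda>t. sqrt (h - V_beta \<beta> (u t)))"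
      unfolding V_beta_def using mc nz B(4) by (intro continuous_intros) auto
    have Ji: "(\<lambda>t. cmod (g t) * sqrt (h - V_beta \<beta> (u t))) integrable_on {0..1}"
      using prod_int[OF fc B(3)] by (simp add: mult.commute)
    have "sqrt (\<beta> + r) * \<Phi> = integral {0..1} (\<lambda>t. sqrt (\<beta> + r) * Q t)"
      unfolding \<Phi>_def by simp
    also have "\<dots> \<le> J" unfolding J_def jacobi_length_def
    proof (rule integral_le[OF _ Ji])
      show "(\<lambda>x. sqrt (\<beta> + r) * Q x) integrable_on {0..1}" using Qi by (intro integrable_on_mult_right)
    next
      fix x :: real assume x: "x \<in> {0..1}"
      show "sqrt (\<beta> + r) * Q x \<le> cmod (g x) * sqrt (h - V_beta \<beta> (u x))"
        unfolding Q_def V_beta_def using pt_ineq[OF r rle[OF x] assms(2,3)] by simp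
    qed
    finally have JP: "sqrt (\<beta> + r) * \<Phi> \<le> J" .
    have "sqrt \<beta> * \<Phi> < sqrt (\<beta> + r) * \<Phi>" using Phip r by (intro mult_strict_right_mono) auto
    then have "sqrt \<beta> * \<Phi> < J" using JP by simp
    then have PJ: "\<Phi> < J / sqrt \<beta>" using assms(3) by (simp add: field_simps)
    have "ln L \<le> ln (cmod (u 0))" using Lm0 assms(1) by (subst ln_le_cancel_iff) auto
    then have "ln L - J / sqrt \<beta> < ln r" using lb PJ by simp
    then have "exp (ln L - J / sqrt \<beta>) < exp (ln r)" by simp
    then have "L * exp (- J / sqrt \<beta>) < r" using assms(1) r by (simp add: exp_diff exp_minus field_simps)
    then show ?thesis unfolding Inf_eq J_def .
  qed
qed

end
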